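(* Let $G$ be a graph. For every $A\subseteq V(G)$ let $\operatorname{mm}(A)$ denote the maximum cardinality of a matching in the bipartite graph $G[A,V(G)\setminus A]$. Then $\operatorname{mm}$ is submodular: for all $A,B\subseteq V(G)$, $$\operatorname{mm}(A)+\operatorname{mm}(B)\ \ge\ \operatorname{mm}(A\cup B)+\operatorname{mm}(A\cap B).$$
   Context: Graphs are finite, simple and undirected. For disjoint $A,B\subseteq V(G)$, $G[A,B]$ denotes the bipartite graph with vertex set $A\cup B$ and edge set $\{uv\in E(G): u\in A, v\in B\}$. *)

theory Defs
  imports Main
begin

definition simple_graph :: "'a set \<Rightarrow> 'a set set \<Rightarrow> bool" where
  "simple_graph V E \<longleftrightarrow> finite V \<and> (\<forall>e\<in>E. \<exists>u v. u \<in> V \<and> v \<in> V \<and> u \<noteq> v \<and> e = {u, v})"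

definition bip_edges :: "'a set set \<Rightarrow> 'a set \<Rightarrow> 'a set \<Rightarrow> 'a set set" where
  "bip_edges E A B = {e \<in> E. \<exists>u v. u \<in> A \<and> v \<in> B \<and> e = {u, v}}"

definition matching :: "'a set set \<Rightarrow> bool" where
  "matching M \<longleftrightarrow> (\<forall>e1\<in>M. \<forall>e2\<in>M. e1 \<noteq> e2 \<longrightarrow> e1 \<inter> e2 = {})"

definition mm :: "'a set \<Rightarrow> 'a set set \<Rightarrow> 'a set \<Rightarrow> nat" where
  "mm V E A = Max {card M | M. M \<subseteq> bip_edges E A (V - A) \<and> matching M}"

end

theory Submission imports Defs begin
lemma hall:
  assumes "finite X" "\<forall>x\<in>X. finite (N x)" "\<forall>S\<subseteq>X. card S \<le> card (\<Union>(N ` S))"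
  shows "\<exists>f. inj_on f X \<and> (\<forall>x\<in>X. f x \<in> N x)"
  using assms
proof (induction "card X" arbitrary: X N rule: less_induct)
  case less
  note fin = less.prems(1) and finN = less.prems(2) and H = less.prems(3)
  show ?case
  proof (cases "\<exists>S. S \<subseteq> X \<and> S \<noteq> {} \<and> S \<noteq> X \<and> card (\<Union>(N ` S)) = card S")
    case True
    then obtain S where S: "S \<subseteq> X" "S \<noteq> {}" "S \<noteq> X" "card (\<Union>(N ` S)) = card S" by blast
    have finS: "finite S" using S fin finite_subset by blast
    have cS: "card S < card X" using S fin by (simp add: psubset_card_mono psubsetI)
    have a1: "\<forall>x\<in>S. finite (N x)" using finN S(1) by auto
    have a2: "\<forall>T\<subseteq>S. card T \<le> card (\<Union>(N ` T))"
    proof (intro allI impI)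
      fix T assume "T \<subseteq> S"
      then have "T \<subseteq> X" using S(1) by blast
      then show "card T \<le> card (\<Union>(N ` T))" using H by blast
    qed
    obtain f1 where f1: "inj_on f1 S" "\<forall>x\<in>S. f1 x \<in> N x"
      using less.hyps[OF cS finS a1 a2] by blast
    define N2 where "N2 = (\<lambda>x. N x - \<Union>(N ` S))"
    have finU: "finite (\<Union>(N ` S))" using finS finN S(1) by auto
    have cXS: "card (X - S) < card X" using S fin
      by (intro psubset_card_mono) auto
    have H2: "\<forall>T\<subseteq>X - S. card T \<le> card (\<Union>(N2 ` T))"
    proof (intro allI impI)
      fix T assume T: "T \<subseteq> X - S"
      have finT: "finite T" using T fin finite_subset by blast
      have eq: "\<Union>(N2 ` T) = \<Union>(N ` (T \<union> S)) - \<Union>(N ` S)" unfolding N2_def by auto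
      have sub: "\<Union>(N ` S) \<subseteq> \<Union>(N ` (T \<union> S))" by auto
      have "card (\<Union>(N2 ` T)) = card (\<Union>(N ` (T \<union> S))) - card (\<Union>(N ` S))"
        unfolding eq using finU by (simp add: card_Diff_subset sub)
      moreover have "T \<union> S \<subseteq> X" using T S(1) by blast
      then have "card (T \<union> S) \<le> card (\<Union>(N ` (T \<union> S)))" using H by blast
      moreover have "card (T \<union> S) = card T + card S" using T finT finS
        by (subst card_Un_disjoint) auto
      ultimately show "card T \<le> card (\<Union>(N2 ` T))" using S(4) by linarith
    qed
    obtain f2 where f2: "inj_on f2 (X - S)" "\<forall>x\<in>X - S. f2 x \<in> N2 x"
      using less.hyps[OF cXS _ _ H2] fin finN unfolding N2_def by blast
    define f where "f = (\<lambda>x. if x \<in> S then f1 x else f2 x)"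
    have "inj_on f X"
    proof (rule inj_onI)
      fix x y assume xy: "x \<in> X" "y \<in> X" "f x = f y"
      show "x = y"
      proof (cases "x \<in> S"; cases "y \<in> S")
        assume "x \<in> S" "y \<in> S" then show ?thesis using xy f1(1) unfolding f_def by (auto dest: inj_onD)
      next
        assume "x \<notin> S" "y \<notin> S" then show ?thesis using xy f2(1) unfolding f_def by (auto dest: inj_onD)
      next
        assume a: "x \<in> S" "y \<notin> S"
        have "f x \<in> \<Union>(N ` S)" using a f1 unfolding f_def by auto
        moreover have "f y \<notin> \<Union>(N ` S)" using a f2 xy(2) unfolding f_def N2_def by auto
        ultimately show ?thesis using xy by simp
      next
        assume a: "x \<notin> S" "y \<in> S"
        have "f y \<in> \<Union>(N ` S)" using a f1 unfolding f_def by auto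
        moreover have "f x \<notin> \<Union>(N ` S)" using a f2 xy(1) unfolding f_def N2_def by auto
        ultimately show ?thesis using xy by simp
      qed
    qed
    moreover have "\<forall>x\<in>X. f x \<in> N x" using f1 f2 unfolding f_def N2_def by auto
    ultimately show ?thesis by blast
  next
    case False
    show ?thesis
    proof (cases "X = {}")
      case True then show ?thesis by auto
    next
      case Xne: False
      then obtain x where x: "x \<in> X" by blast
      have strict: "\<forall>S. S \<subseteq> X \<and> S \<noteq> {} \<and> S \<noteq> X \<longrightarrow> card S < card (\<Union>(N ` S))"
      proof (intro allI impI)
        fix S assume S: "S \<subseteq> X \<and> S \<noteq> {} \<and> S \<noteq> X"
        then have "card S \<le> card (\<Union>(N ` S))" using H by blast
        moreover have "card (\<Union>(N ` S)) \<noteq> card S" using False S by blast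
        ultimately show "card S < card (\<Union>(N ` S))" by linarith
      qed
      have "1 \<le> card (N x)" using H[rule_format, of "{x}"] x by auto
      then obtain y where y: "y \<in> N x" by (metis card.empty ex_in_conv not_one_le_zero)
      define N' where "N' = (\<lambda>z. N z - {y})"
      have cX': "card (X - {x}) < card X" using x fin by (meson card_Diff1_less)
      have H': "\<forall>T\<subseteq>X - {x}. card T \<le> card (\<Union>(N' ` T))"
      proof (intro allI impI)
        fix T assume T: "T \<subseteq> X - {x}"
        show "card T \<le> card (\<Union>(N' ` T))"
        proof (cases "T = {}")
          case True then show ?thesis by simp
        next
          case False
          have finT: "finite T" using T fin finite_subset by blast
          have "card T < card (\<Union>(N ` T))" using strict T False x by blast
          moreover have "\<Union>(N' ` T) = \<Union>(N ` T) - {y}" unfolding N'_def by auto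
          moreover have "finite (\<Union>(N ` T))" using finT finN T by auto
          ultimately show ?thesis by (simp add: card_Diff_singleton_if del: UN_iff Union_iff) linarith
        qed
      qed
      obtain f' where f': "inj_on f' (X - {x})" "\<forall>z\<in>X - {x}. f' z \<in> N' z"
        using less.hyps[OF cX' _ _ H'] fin finN unfolding N'_def by blast
      define f where "f = f'(x := y)"
      have "inj_on f X"
      proof (rule inj_onI)
        fix a b assume ab: "a \<in> X" "b \<in> X" "f a = f b"
        have ne: "f' z \<noteq> y" if "z \<in> X - {x}" for z using f'(2) that unfolding N'_def by auto
        have fy: "f z = y \<longleftrightarrow> z = x" if "z \<in> X" for z
          using ne[of z] that unfolding f_def by auto
        have fo: "f z = f' z" if "z \<noteq> x" for z using that unfolding f_def by simp
        show "a = b"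
        proof (cases "a = x \<or> b = x")
          case True
          then show ?thesis using fy ab by metis
        next
          case False
          then have "f' a = f' b" using fo ab(3) by metis
          then show ?thesis using f'(1) False ab(1,2) inj_onD by fastforce
        qed
      qed
      moreover have "\<forall>z\<in>X. f z \<in> N z" using f' y unfolding f_def N'_def by auto
      ultimately show ?thesis by blast
    qed
  qed
qed

lemma defic:
  assumes fin: "finite X" and finN: "\<forall>x\<in>X. finite (N x)"
  shows "\<exists>S\<subseteq>X. \<exists>X'\<subseteq>X. \<exists>g. inj_on g X' \<and> (\<forall>x\<in>X'. g x \<in> N x) \<and>
           card X + card (\<Union>(N ` S)) \<le> card X' + card S"
proof -
  define D where "D = (\<lambda>S. card S - card (\<Union>(N ` S))) ` Pow X"
  have finD: "finite D" "D \<noteq> {}" unfolding D_def using fin by auto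
  define d where "d = Max D"
  obtain S0 where S0: "S0 \<subseteq> X" "d = card S0 - card (\<Union>(N ` S0))"
    using Max_in[OF finD] unfolding d_def D_def by auto
  have bound: "card T - card (\<Union>(N ` T)) \<le> d" if "T \<subseteq> X" for T
    unfolding d_def using finD(1) that unfolding D_def by (intro Max_ge) auto
  define N' where "N' = (\<lambda>x. Inl ` N x \<union> Inr ` {..<d})"
  have finN': "\<forall>x\<in>X. finite (N' x)" using finN unfolding N'_def by auto
  have H: "\<forall>T\<subseteq>X. card T \<le> card (\<Union>(N' ` T))"
  proof (intro allI impI)
    fix T assume T: "T \<subseteq> X"
    show "card T \<le> card (\<Union>(N' ` T))"
    proof (cases "T = {}")
      case True then show ?thesis by simp
    next
      case False
      have finT: "finite T" using T fin finite_subset by blast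
      have finU: "finite (\<Union>(N ` T))" using finT finN T by auto
      have eq: "\<Union>(N' ` T) = Inl ` (\<Union>(N ` T)) \<union> Inr ` {..<d}" using False unfolding N'_def by auto
      have "card (\<Union>(N' ` T)) = card (\<Union>(N ` T)) + d"
        unfolding eq using finU by (subst card_Un_disjoint) (auto simp: card_image)
      then show ?thesis using bound[OF T] by linarith
    qed
  qed
  obtain f where f: "inj_on f X" "\<forall>x\<in>X. f x \<in> N' x" using hall[OF fin finN' H] by blast
  define X' where "X' = {x\<in>X. isl (f x)}"
  define g where "g = (\<lambda>x. projl (f x))"
  have fX': "\<forall>x\<in>X'. f x = Inl (g x)" unfolding X'_def g_def by auto
  have injg: "inj_on g X'"
  proof (rule inj_onI)
    fix x y assume "x \<in> X'" "y \<in> X'" "g x = g y"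
    then have "f x = f y" using fX' by metis
    then show "x = y" using f(1) \<open>x \<in> X'\<close> \<open>y \<in> X'\<close> unfolding X'_def by (auto dest: inj_onD)
  qed
  have gN: "\<forall>x\<in>X'. g x \<in> N x"
  proof
    fix x assume x: "x \<in> X'"
    have xX: "x \<in> X" using x unfolding X'_def by blast
    have "f x \<in> N' x" using f(2) xX by blast
    then have "Inl (g x) \<in> N' x" using fX' x by metis
    then have "Inl (g x) \<in> Inl ` N x \<union> Inr ` {..<d}" unfolding N'_def .
    then show "g x \<in> N x" by (auto simp: image_iff)
  qed
  have sub: "f ` (X - X') \<subseteq> Inr ` {..<d}"
  proof
    fix z assume "z \<in> f ` (X - X')"
    then obtain x where x: "x \<in> X" "\<not> isl (f x)" "z = f x" unfolding X'_def by auto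
    then have "f x \<in> N' x" using f(2) by auto
    then show "z \<in> Inr ` {..<d}" using x unfolding N'_def by auto
  qed
  have cXX: "card (X - X') \<le> d"
  proof -
    have c1: "card (X - X') = card (f ` (X - X'))"
      by (rule card_image[symmetric], rule inj_on_subset[OF f(1)]) blast
    show ?thesis using c1 card_mono[OF _ sub] by (simp add: card_image)
  qed
  have X'X: "X' \<subseteq> X" unfolding X'_def by auto
  have "card (X - X') = card X - card X'"
    using X'X fin by (intro card_Diff_subset) (auto intro: finite_subset)
  moreover have "card X' \<le> card X" using X'X fin by (intro card_mono)
  ultimately have "card X = card X' + card (X - X')" by linarith
  then have cX: "card X \<le> card X' + d" using cXX by linarith
  show ?thesis
  proof (cases "card (\<Union>(N ` S0)) \<le> card S0")
    case True
    then have "card X + card (\<Union>(N ` S0)) \<le> card X' + card S0" using cX S0(2) by linarith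
    then show ?thesis using S0(1) X'X injg gN by blast
  next
    case False
    then have "d = 0" using S0(2) by simp
    then have "card X + card (\<Union>(N ` {})) \<le> card X' + card {}" using cX by simp
    then show ?thesis using X'X injg gN by blast
  qed
qed

lemma finE: assumes "simple_graph V E" shows "finite E" "finite V" "\<forall>e\<in>E. e \<subseteq> V"
proof -
  show "finite V" "\<forall>e\<in>E. e \<subseteq> V" using assms unfolding simple_graph_def by auto
  then show "finite E" by (meson Pow_iff finite_Pow_iff finite_subset subsetI)
qed

lemma mm_facts:
  assumes "simple_graph V E"
  shows "\<And>M. M \<subseteq> bip_edges E A (V - A) \<Longrightarrow> matching M \<Longrightarrow> card M \<le> mm V E A"
    and "\<exists>M. M \<subseteq> bip_edges E A (V - A) \<and> matching M \<and> card M = mm V E A"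
proof -
  define B where "B = bip_edges E A (V - A)"
  have finB: "finite B" using finE(1)[OF assms] unfolding B_def bip_edges_def by auto
  have sub: "{card M | M. M \<subseteq> B \<and> matching M} \<subseteq> card ` Pow B" by auto
  have fin: "finite {card M | M. M \<subseteq> B \<and> matching M}"
    using finite_subset[OF sub] finB by auto
  have ne: "{card M | M. M \<subseteq> B \<and> matching M} \<noteq> {}"
    unfolding matching_def by auto
  show "\<And>M. M \<subseteq> bip_edges E A (V - A) \<Longrightarrow> matching M \<Longrightarrow> card M \<le> mm V E A"
    unfolding mm_def B_def[symmetric] using fin by (intro Max_ge) auto
  show "\<exists>M. M \<subseteq> bip_edges E A (V - A) \<and> matching M \<and> card M = mm V E A"
    using Max_in[OF fin ne] unfolding mm_def B_def[symmetric] by auto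
qed

lemma weak:
  assumes G: "simple_graph V E" and AV: "A \<subseteq> V" and S: "S \<subseteq> A" and T: "T \<subseteq> V - A"
    and no: "\<forall>u\<in>S. \<forall>v\<in>T. {u, v} \<notin> E"
  shows "mm V E A + card S + card T \<le> card V"
proof -
  obtain M where M: "M \<subseteq> bip_edges E A (V - A)" "matching M" "card M = mm V E A"
    using mm_facts(2)[OF G] by blast
  define C where "C = V - (S \<union> T)"
  have hit: "e \<inter> C \<noteq> {}" if e: "e \<in> M" for e
  proof -
    obtain u v where uv: "u \<in> A" "v \<in> V - A" "e = {u, v}" "e \<in> E"
      using M(1) e unfolding bip_edges_def by blast
    show ?thesis
    proof (cases "u \<in> S")
      case False then have "u \<in> C" using uv AV T unfolding C_def by auto
      then show ?thesis using uv by auto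
    next
      case True then have "v \<notin> T" using no uv by blast
      then have "v \<in> C" using uv S unfolding C_def by auto
      then show ?thesis using uv by auto
    qed
  qed
  define h where "h = (\<lambda>e. SOME w. w \<in> e \<inter> C)"
  have hin: "h e \<in> e \<inter> C" if "e \<in> M" for e
    unfolding h_def using hit[OF that] by (metis some_in_eq)
  have "inj_on h M"
  proof (rule inj_onI)
    fix e1 e2 assume e: "e1 \<in> M" "e2 \<in> M" "h e1 = h e2"
    have "h e1 \<in> e1" "h e2 \<in> e2" using hin e(1,2) by auto
    then have "h e1 \<in> e1 \<inter> e2" using e(3) by auto
    then show "e1 = e2" using M(2) e unfolding matching_def by blast
  qed
  moreover have "h ` M \<subseteq> C" using hin by auto
  moreover have "finite C" using finE(2)[OF G] unfolding C_def by auto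
  ultimately have "card M \<le> card C" by (rule card_inj_on_le)
  moreover have "card C = card V - card (S \<union> T)"
    unfolding C_def using S T AV finE(2)[OF G] by (intro card_Diff_subset) (auto intro: finite_subset)
  moreover have "card (S \<union> T) = card S + card T"
    using S T AV finE(2)[OF G] by (intro card_Un_disjoint) (auto intro: finite_subset)
  moreover have "card (S \<union> T) \<le> card V"
    using S T AV finE(2)[OF G] by (intro card_mono) auto
  ultimately show ?thesis using M(3) by linarith
qed

lemma strong:
  assumes G: "simple_graph V E" and AV: "A \<subseteq> V"
  shows "\<exists>S\<subseteq>A. \<exists>T\<subseteq>V - A. (\<forall>u\<in>S. \<forall>v\<in>T. {u, v} \<notin> E) \<and> card V \<le> mm V E A + card S + card T"
proof -
  have finV: "finite V" using finE(2)[OF G] .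
  define N where "N = (\<lambda>x. {y \<in> V - A. {x, y} \<in> E})"
  have finA: "finite A" using AV finV finite_subset by blast
  have finN: "\<forall>x\<in>A. finite (N x)" unfolding N_def using finV by auto
  obtain S X' g where S: "S \<subseteq> A" "X' \<subseteq> A" "inj_on g X'" "\<forall>x\<in>X'. g x \<in> N x"
      "card A + card (\<Union>(N ` S)) \<le> card X' + card S"
    using defic[OF finA finN] by blast
  define T where "T = (V - A) - \<Union>(N ` S)"
  have no: "\<forall>u\<in>S. \<forall>v\<in>T. {u, v} \<notin> E" unfolding T_def N_def by auto
  define M where "M = (\<lambda>x. {x, g x}) ` X'"
  have Msub: "M \<subseteq> bip_edges E A (V - A)"
    unfolding M_def bip_edges_def using S(2,4) unfolding N_def by blast
  have gout: "\<forall>x\<in>X'. g x \<notin> A" using S(4) unfolding N_def by auto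
  have Mm: "matching M"
    unfolding matching_def M_def
  proof (intro ballI impI)
    fix e1 e2 assume e: "e1 \<in> (\<lambda>x. {x, g x}) ` X'" "e2 \<in> (\<lambda>x. {x, g x}) ` X'" "e1 \<noteq> e2"
    then obtain x y where xy: "x \<in> X'" "y \<in> X'" "e1 = {x, g x}" "e2 = {y, g y}" by blast
    then have "x \<noteq> y" using e by blast
    then have "g x \<noteq> g y" using S(3) xy by (auto dest: inj_onD)
    moreover have "x \<noteq> g y" "y \<noteq> g x" using gout xy S(2) by auto
    ultimately show "e1 \<inter> e2 = {}" using xy \<open>x \<noteq> y\<close> by auto
  qed
  have "inj_on (\<lambda>x. {x, g x}) X'"
  proof (rule inj_onI)
    fix x y assume xy: "x \<in> X'" "y \<in> X'" "{x, g x} = {y, g y}"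
    then have "x \<in> {y, g y}" by blast
    moreover have "x \<noteq> g y" using gout xy S(2) by auto
    ultimately show "x = y" by auto
  qed
  then have cM: "card M = card X'" unfolding M_def by (rule card_image)
  have "card M \<le> mm V E A" using mm_facts(1)[OF G Msub Mm] .
  moreover have NS: "\<Union>(N ` S) \<subseteq> V - A" unfolding N_def by auto
  moreover have "card T = card (V - A) - card (\<Union>(N ` S))"
    unfolding T_def using NS finV by (intro card_Diff_subset) (auto intro: finite_subset)
  moreover have "card (\<Union>(N ` S)) \<le> card (V - A)" using NS finV by (intro card_mono) auto
  moreover have "card (V - A) = card V - card A"
    using AV finV by (intro card_Diff_subset) (auto intro: finite_subset)
  moreover have "card A \<le> card V" using AV finV by (intro card_mono)
  ultimately have "card V \<le> mm V E A + card S + card T" using S(5) cM by linarith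
  moreover have "T \<subseteq> V - A" unfolding T_def by auto
  ultimately show ?thesis using S(1) no by blast
qed

theorem theorem3:
  fixes V :: "'a set" and E :: "'a set set" and A B :: "'a set"
  assumes "simple_graph V E"
    and "A \<subseteq> V" and "B \<subseteq> V"
  shows "mm V E A + mm V E B \<ge> mm V E (A \<union> B) + mm V E (A \<inter> B)"
proof -
  have finV: "finite V" using finE(2)[OF assms(1)] .
  obtain S1 T1 where 1: "S1 \<subseteq> A" "T1 \<subseteq> V - A" "\<forall>u\<in>S1. \<forall>v\<in>T1. {u, v} \<notin> E"
      "card V \<le> mm V E A + card S1 + card T1"
    using strong[OF assms(1,2)] by blast
  obtain S2 T2 where 2: "S2 \<subseteq> B" "T2 \<subseteq> V - B" "\<forall>u\<in>S2. \<forall>v\<in>T2. {u, v} \<notin> E"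
      "card V \<le> mm V E B + card S2 + card T2"
    using strong[OF assms(1,3)] by blast
  have u: "mm V E (A \<union> B) + card (S1 \<union> S2) + card (T1 \<inter> T2) \<le> card V"
    by (rule weak[OF assms(1)]) (use assms 1 2 in blast)+
  have i: "mm V E (A \<inter> B) + card (S1 \<inter> S2) + card (T1 \<union> T2) \<le> card V"
    by (rule weak[OF assms(1)]) (use assms 1 2 in blast)+
  have v: "S1 \<subseteq> V" "S2 \<subseteq> V" "T1 \<subseteq> V" "T2 \<subseteq> V" using 1 2 assms by blast+
  have fS: "finite S1" "finite S2" "finite T1" "finite T2"
    using finite_subset[OF v(1) finV] finite_subset[OF v(2) finV] finite_subset[OF v(3) finV]
      finite_subset[OF v(4) finV] by simp_all
  have "card S1 + card S2 = card (S1 \<union> S2) + card (S1 \<inter> S2)"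
    using fS by (intro card_Un_Int)
  moreover have "card T1 + card T2 = card (T1 \<union> T2) + card (T1 \<inter> T2)"
    using fS by (intro card_Un_Int)
  ultimately show ?thesis using u i 1(4) 2(4) by linarith
qed

end
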